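(* Let $0<1/n_0\ll1/r\ll\alpha_1,\alpha_2<1$ and let $n\ge n_0$. Let $\preceq$ be a linear ordering of the edges of an $n$-vertex linear hypergraph $\mathcal H$ in which every edge $e$ satisfies $|e|\ge r$. Suppose that each edge $e\in\mathcal H$ is given a list $C(e)$ of colours with $|C(e)|\ge d^{\preceq}(e)+\alpha_1 n$. Then there is an $\alpha_2$-bounded proper edge-colouring $\phi$ of $\mathcal H$ with $\phi(e)\in C(e)$ for every $e\in\mathcal H$.
   Context: A hypergraph has a finite vertex set and a set of nonempty edges; linear means any two distinct edges share at most one vertex. $N(e)$ is the set of edges $f\ne e$ with $f\cap e\ne\varnothing$, and for a linear ordering $\preceq$, $d^{\preceq}(e)$ is the number of $f\in N(e)$ with $f\preceq e$. A proper edge-colouring $\phi$ of an $n$-vertex hypergraph is $\alpha$-bounded if every colour $c$ either is assigned to at most one edge, or the edges coloured $c$ cover at most $\alpha n$ vertices. Hierarchy: $r$ sufficiently large in terms of $\alpha_1,\alpha_2$, and $n_0$ sufficiently large in terms of $r$. *)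

theory Defs
  imports Complex_Main
begin

definition hypergraph :: "'a set \<Rightarrow> 'a set set \<Rightarrow> bool" where
  "hypergraph V E \<longleftrightarrow> finite V \<and> (\<forall>e\<in>E. e \<noteq> {} \<and> e \<subseteq> V)"

definition linear_hypergraph :: "'a set \<Rightarrow> 'a set set \<Rightarrow> bool" where
  "linear_hypergraph V E \<longleftrightarrow> hypergraph V E \<and>
     (\<forall>e\<in>E. \<forall>f\<in>E. e \<noteq> f \<longrightarrow> card (e \<inter> f) \<le> 1)"

definition edge_nbhd :: "'a set set \<Rightarrow> 'a set \<Rightarrow> 'a set set" where
  "edge_nbhd E e = {f \<in> E. f \<noteq> e \<and> f \<inter> e \<noteq> {}}"

text \<open>d^{R}(e): number of f in N(e) with f R-preceding-or-equal e (R a linear order on E,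
  given as a relation of pairs (f, e) meaning f \<preceq> e).\<close>
definition back_degree :: "'a set set \<Rightarrow> ('a set \<times> 'a set) set \<Rightarrow> 'a set \<Rightarrow> nat" where
  "back_degree E R e = card {f \<in> edge_nbhd E e. (f, e) \<in> R}"

definition proper_edge_colouring :: "'a set set \<Rightarrow> ('a set \<Rightarrow> 'c) \<Rightarrow> bool" where
  "proper_edge_colouring E \<phi> \<longleftrightarrow>
     (\<forall>e\<in>E. \<forall>f\<in>E. e \<noteq> f \<and> e \<inter> f \<noteq> {} \<longrightarrow> \<phi> e \<noteq> \<phi> f)"

definition bounded_colouring :: "real \<Rightarrow> nat \<Rightarrow> 'a set set \<Rightarrow> ('a set \<Rightarrow> 'c) \<Rightarrow> bool" where
  "bounded_colouring \<alpha> n E \<phi> \<longleftrightarrow>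
     proper_edge_colouring E \<phi> \<and>
     (\<forall>c. card {e \<in> E. \<phi> e = c} \<le> 1 \<or> real (card (\<Union>{e \<in> E. \<phi> e = c})) \<le> \<alpha> * real n)"

end

theory Submission
  imports Defs
begin

lemma max_elem:
  assumes "linear_order_on E R" "finite A" "A \<noteq> {}" "A \<subseteq> E"
  shows "\<exists>e\<in>A. \<forall>f\<in>A. (f, e) \<in> R"
  using assms(2,3,4)
proof (induction A rule: finite_ne_induct)
  case (singleton x)
  then show ?case using assms(1) unfolding linear_order_on_def partial_order_on_def preorder_on_def refl_on_def by auto
next
  case (insert x A)
  then obtain m where m: "m \<in> A" "\<forall>f\<in>A. (f, m) \<in> R" by auto
  have refl: "(x,x) \<in> R" using insert assms(1) unfolding linear_order_on_def partial_order_on_def preorder_on_def refl_on_def by auto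
  have tr: "trans R" using assms(1) unfolding linear_order_on_def partial_order_on_def preorder_on_def by auto
  have tot: "x \<noteq> m \<Longrightarrow> (x, m) \<in> R \<or> (m, x) \<in> R" using assms(1) insert m unfolding linear_order_on_def total_on_def by auto
  show ?case
  proof (cases "(m, x) \<in> R")
    case True
    then show ?thesis using m refl tr by (auto dest: transD)
  next
    case False
    then have "(x, m) \<in> R" using tot refl by auto
    then show ?thesis using m by auto
  qed
qed

lemma inj_choice:
  "finite B \<Longrightarrow> (\<forall>e\<in>B. finite (C e) \<and> card B \<le> card (C e)) \<Longrightarrow> \<exists>g. inj_on g B \<and> (\<forall>e\<in>B. g e \<in> C e)"
proof (induction B rule: finite_induct)
  case empty
  then show ?case by auto
next
  case (insert x B)
  then have "\<forall>e\<in>B. finite (C e) \<and> card B \<le> card (C e)" by auto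
  with insert obtain g where g: "inj_on g B" "\<forall>e\<in>B. g e \<in> C e" by blast
  have "card (g ` B) < card (C x)" using insert card_image_le[of B g] by auto
  moreover have "finite (g ` B)" using insert by auto
  ultimately have "\<not> C x \<subseteq> g ` B" using card_mono[of "g ` B" "C x"] by linarith
  then obtain c where c: "c \<in> C x" "c \<notin> g ` B" by auto
  have "inj_on (g(x := c)) (insert x B)" using g c insert(2) by (auto simp: inj_on_def)
  moreover have "\<forall>e\<in>insert x B. (g(x := c)) e \<in> C e" using g c insert(2) by auto
  ultimately show ?case by blast
qed

lemma deg_bound:
  assumes "linear_hypergraph V E" "\<forall>e\<in>E. card e \<ge> r" "v \<in> V"
  shows "card {f\<in>E. v \<in> f} * (r - 1) \<le> card V"
proof -
  have finV: "finite V" and sub: "\<forall>e\<in>E. e \<subseteq> V" and lin: "\<forall>e\<in>E. \<forall>f\<in>E. e \<noteq> f \<longrightarrow> card (e \<inter> f) \<le> 1"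
    using assms(1) unfolding linear_hypergraph_def hypergraph_def by auto
  have finE: "finite E" using sub finV by (meson Pow_iff finite_Pow_iff finite_subset subsetI)
  define F where "F = {f\<in>E. v \<in> f}"
  have finF: "finite F" using finE F_def by auto
  have fin_f: "\<forall>f\<in>F. finite (f - {v})" using sub finV F_def by (auto intro: finite_subset)
  have disj: "\<forall>f\<in>F. \<forall>g\<in>F. f \<noteq> g \<longrightarrow> (f - {v}) \<inter> (g - {v}) = {}"
  proof (intro ballI impI)
    fix f g assume fg: "f \<in> F" "g \<in> F" "f \<noteq> g"
    have "card (f \<inter> g) \<le> 1" using lin fg F_def by auto
    moreover have "finite (f \<inter> g)" using fg sub finV F_def by (metis (no_types, lifting) F_def finite_Int finite_subset mem_Collect_eq)
    moreover have "v \<in> f \<inter> g" using fg F_def by auto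
    ultimately have "f \<inter> g = {v}" using card_le_Suc0_iff_eq[of "f \<inter> g"] by auto
    then show "(f - {v}) \<inter> (g - {v}) = {}" by auto
  qed
  have "card F * (r - 1) = (\<Sum>f\<in>F. r - 1)" by simp
  also have "\<dots> \<le> (\<Sum>f\<in>F. card (f - {v}))"
  proof (rule sum_mono)
    fix f assume "f \<in> F"
    then have "card f \<ge> r" "v \<in> f" "finite f" using assms(2) F_def fin_f by auto
    then show "r - 1 \<le> card (f - {v})" by (simp add: card_Diff_singleton)
  qed
  also have "\<dots> = card (\<Union>f\<in>F. f - {v})" using card_UN_disjoint[OF finF fin_f disj] by simp
  also have "\<dots> \<le> card V" using finV sub F_def by (intro card_mono) auto
  finally show ?thesis unfolding F_def .
qed

lemma sum_bound:
  assumes "linear_hypergraph V E" "\<forall>e\<in>E. card e \<ge> r"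
  shows "(\<Sum>f\<in>E. card f) * (r - 1) \<le> card V * card V"
proof -
  have finV: "finite V" and sub: "\<forall>e\<in>E. e \<subseteq> V"
    using assms(1) unfolding linear_hypergraph_def hypergraph_def by auto
  have finE: "finite E" using sub finV by (meson Pow_iff finite_Pow_iff finite_subset subsetI)
  have "(\<Sum>f\<in>E. card f) = (\<Sum>f\<in>E. \<Sum>v\<in>V. if v \<in> f then 1 else 0)"
  proof (rule sum.cong)
    fix f assume "f \<in> E"
    then have "{v\<in>V. v \<in> f} = f" using sub by auto
    then show "card f = (\<Sum>v\<in>V. if v \<in> f then 1 else 0)"
      using sum.inter_filter[OF finV, of "\<lambda>_. 1::nat" "\<lambda>v. v \<in> f"] by simp
  qed simp
  also have "\<dots> = (\<Sum>v\<in>V. \<Sum>f\<in>E. if v \<in> f then 1 else 0)" by (rule sum.swap)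
  also have "\<dots> = (\<Sum>v\<in>V. card {f\<in>E. v \<in> f})"
    using sum.inter_filter[OF finE, of "\<lambda>_. 1::nat"] by simp
  finally have eq: "(\<Sum>f\<in>E. card f) = (\<Sum>v\<in>V. card {f\<in>E. v \<in> f})" .
  have "(\<Sum>f\<in>E. card f) * (r - 1) = (\<Sum>v\<in>V. card {f\<in>E. v \<in> f} * (r - 1))"
    by (simp add: eq sum_distrib_right)
  also have "\<dots> \<le> (\<Sum>v\<in>V. card V)" using deg_bound[OF assms] by (intro sum_mono) auto
  also have "\<dots> = card V * card V" by simp
  finally show ?thesis .
qed

definition good :: "'a set set \<Rightarrow> ('a set \<Rightarrow> 'c set) \<Rightarrow> 'c set \<Rightarrow> real \<Rightarrow> nat \<Rightarrow> 'a set set \<Rightarrow> ('a set \<Rightarrow> 'c) \<Rightarrow> bool" where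
"good E C Bc \<alpha>2 n D \<phi> \<longleftrightarrow> (\<forall>e\<in>D. \<phi> e \<in> C e \<and> \<phi> e \<notin> Bc) \<and>
   (\<forall>e\<in>D. \<forall>f\<in>D. e \<noteq> f \<and> e \<inter> f \<noteq> {} \<longrightarrow> \<phi> e \<noteq> \<phi> f) \<and>
   (\<forall>c. card {e\<in>D. \<phi> e = c} \<le> 1 \<or> real (card (\<Union>{e\<in>D. \<phi> e = c})) \<le> \<alpha>2 * real n)"

lemma small_col:
  assumes finE: "finite E" and fine: "\<forall>e\<in>E. finite e"
  and SmE: "Sm \<subseteq> E"
  and small: "\<forall>e\<in>Sm. 2 * real (card e) \<le> \<alpha>2 * real n"
  and lo: "linear_order_on E R"
  and lists: "\<forall>e\<in>E. finite (C e) \<and> real (card (C e)) \<ge> real (back_degree E R e) + \<alpha>1 * real n"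
  and finBc: "finite Bc"
  and key: "\<forall>m::nat. real m * (\<alpha>2 * real n / 2) \<le> real (\<Sum>f\<in>Sm. card f) \<longrightarrow> real (card Bc) + real m < \<alpha>1 * real n"
  shows "D \<subseteq> Sm \<Longrightarrow> \<exists>\<phi>. good E C Bc \<alpha>2 n D \<phi>"
proof (induction "card D" arbitrary: D rule: less_induct)
  case less
  show ?case
  proof (cases "D = {}")
    case True then show ?thesis by (auto simp: good_def)
  next
    case False
    have finSm: "finite Sm" using SmE finE finite_subset by blast
    have finD: "finite D" using less.prems finSm finite_subset by blast
    obtain e where e: "e \<in> D" "\<forall>f\<in>D. (f,e) \<in> R" using max_elem[OF lo finD False] less.prems SmE by blast
    define D' where "D' = D - {e}"
    have "card D' < card D" using e finD D'_def by (metis card_Diff1_less)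
    moreover have "D' \<subseteq> Sm" using less.prems D'_def by auto
    ultimately obtain \<phi> where \<phi>: "good E C Bc \<alpha>2 n D' \<phi>" using less.hyps by blast
    have finD': "finite D'" using finD D'_def by auto
    have eE: "e \<in> E" "e \<in> Sm" using e less.prems SmE by auto
    define A1 where "A1 = \<phi> ` {f\<in>D'. f \<inter> e \<noteq> {}}"
    define A3 where "A3 = {c \<in> \<phi> ` D'. \<alpha>2 * real n < 2 * real (card (\<Union>{f\<in>D'. \<phi> f = c}))}"
    have finA1: "finite A1" using finD' A1_def by auto
    have finA3: "finite A3" using finD' A3_def by auto
    have A1: "card A1 \<le> back_degree E R e"
    proof -
      have sub: "{f\<in>D'. f \<inter> e \<noteq> {}} \<subseteq> {f \<in> edge_nbhd E e. (f,e) \<in> R}"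
        using e D'_def SmE less.prems unfolding edge_nbhd_def by auto
      have fin: "finite {f \<in> edge_nbhd E e. (f,e) \<in> R}" using finE unfolding edge_nbhd_def by auto
      have "card A1 \<le> card {f\<in>D'. f \<inter> e \<noteq> {}}" unfolding A1_def by (rule card_image_le) (use finD' in auto)
      also have "\<dots> \<le> card {f \<in> edge_nbhd E e. (f,e) \<in> R}" by (rule card_mono[OF fin sub])
      finally show ?thesis unfolding back_degree_def .
    qed
    have A3: "real (card A3) * (\<alpha>2 * real n / 2) \<le> real (\<Sum>f\<in>Sm. card f)"
    proof -
      have "real (card A3) * (\<alpha>2 * real n / 2) = (\<Sum>c\<in>A3. \<alpha>2 * real n / 2)" by simp
      also have "\<dots> \<le> (\<Sum>c\<in>A3. real (\<Sum>f\<in>{x. x \<in> {f\<in>D'. \<phi> f \<in> A3} \<and> \<phi> x = c}. card f))"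
      proof (rule sum_mono)
        fix c assume c: "c \<in> A3"
        have "{x. x \<in> {f\<in>D'. \<phi> f \<in> A3} \<and> \<phi> x = c} = {f\<in>D'. \<phi> f = c}" using c by auto
        moreover have "card (\<Union>{f\<in>D'. \<phi> f = c}) \<le> sum card {f\<in>D'. \<phi> f = c}" by (rule card_Union_le_sum_card)
        moreover have "\<alpha>2 * real n < 2 * real (card (\<Union>{f\<in>D'. \<phi> f = c}))" using c A3_def by auto
        ultimately show "\<alpha>2 * real n / 2 \<le> real (\<Sum>f\<in>{x. x \<in> {f\<in>D'. \<phi> f \<in> A3} \<and> \<phi> x = c}. card f)"
        proof -
          assume a: "{x. x \<in> {f\<in>D'. \<phi> f \<in> A3} \<and> \<phi> x = c} = {f\<in>D'. \<phi> f = c}"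
            "card (\<Union>{f\<in>D'. \<phi> f = c}) \<le> sum card {f\<in>D'. \<phi> f = c}"
            "\<alpha>2 * real n < 2 * real (card (\<Union>{f\<in>D'. \<phi> f = c}))"
          have "real (card (\<Union>{f\<in>D'. \<phi> f = c})) \<le> real (sum card {f\<in>D'. \<phi> f = c})"
            using a(2) by (simp only: of_nat_le_iff)
          then have "\<alpha>2 * real n / 2 \<le> real (sum card {f\<in>D'. \<phi> f = c})" using a(3) by linarith
          then show ?thesis by (simp only: a(1))
        qed
      qed
      also have "\<dots> = real (\<Sum>c\<in>A3. \<Sum>f\<in>{x. x \<in> {f\<in>D'. \<phi> f \<in> A3} \<and> \<phi> x = c}. card f)"
        by simp
      also have "\<dots> = real (\<Sum>f\<in>{f\<in>D'. \<phi> f \<in> A3}. card f)"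
        by (rule arg_cong[where f=real], rule sum.group) (use finD' finA3 in auto)
      also have "\<dots> \<le> real (\<Sum>f\<in>Sm. card f)"
        using D'_def less.prems finSm by (intro of_nat_mono sum_mono2) auto
      finally show ?thesis .
    qed
    have bound: "real (card Bc) + real (card A3) < \<alpha>1 * real n" using key A3 by blast
    have "card (A1 \<union> Bc \<union> A3) \<le> card A1 + card Bc + card A3"
      by (meson add_le_mono card_Un_le le_refl order_trans)
    then have "real (card (A1 \<union> Bc \<union> A3)) < real (card (C e))"
      using A1 bound lists eE by fastforce
    moreover have "finite (C e)" using lists eE by auto
    have "\<not> C e \<subseteq> A1 \<union> Bc \<union> A3"
    proof
      assume "C e \<subseteq> A1 \<union> Bc \<union> A3"
      then have "card (C e) \<le> card (A1 \<union> Bc \<union> A3)" using finA1 finA3 finBc by (intro card_mono) auto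
      then show False using \<open>real (card (A1 \<union> Bc \<union> A3)) < real (card (C e))\<close> by linarith
    qed
    then obtain c where c: "c \<in> C e" "c \<notin> A1" "c \<notin> Bc" "c \<notin> A3" by auto
    define \<psi> where "\<psi> = \<phi>(e := c)"
    have g1: "\<forall>x\<in>D. \<psi> x \<in> C x \<and> \<psi> x \<notin> Bc"
      using \<phi> c unfolding good_def \<psi>_def D'_def by auto
    have g2: "\<forall>x\<in>D. \<forall>y\<in>D. x \<noteq> y \<and> x \<inter> y \<noteq> {} \<longrightarrow> \<psi> x \<noteq> \<psi> y"
    proof (intro ballI impI)
      fix x y assume xy: "x \<in> D" "y \<in> D" "x \<noteq> y \<and> x \<inter> y \<noteq> {}"
      show "\<psi> x \<noteq> \<psi> y"
      proof (cases "x = e \<or> y = e")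
        case True
        then show ?thesis using xy c(2) unfolding A1_def \<psi>_def D'_def by auto
      next
        case False
        then show ?thesis using xy \<phi> unfolding good_def \<psi>_def D'_def by auto
      qed
    qed
    have g3: "card {x\<in>D. \<psi> x = c'} \<le> 1 \<or> real (card (\<Union>{x\<in>D. \<psi> x = c'})) \<le> \<alpha>2 * real n" for c'
    proof (cases "c' = c")
      case False
      then have "{x\<in>D. \<psi> x = c'} = {x\<in>D'. \<phi> x = c'}" using e D'_def \<psi>_def by auto
      then show ?thesis using \<phi> unfolding good_def by auto
    next
      case True
      define K where "K = {x\<in>D'. \<phi> x = c}"
      have cls: "{x\<in>D. \<psi> x = c'} = insert e K" using True e D'_def \<psi>_def K_def by auto
      show ?thesis
      proof (cases "K = {}")
        case True
        then show ?thesis using cls by auto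
      next
        case False
        then have "c \<in> \<phi> ` D'" using K_def by auto
        then have h: "2 * real (card (\<Union>K)) \<le> \<alpha>2 * real n" using c(4) A3_def K_def by auto
        have "card (\<Union>(insert e K)) \<le> card e + card (\<Union>K)" by (simp add: card_Un_le)
        moreover have "2 * real (card e) \<le> \<alpha>2 * real n" using small eE by auto
        ultimately have "real (card (\<Union>(insert e K))) \<le> \<alpha>2 * real n" using h
          by (smt (verit) of_nat_add of_nat_le_iff)
        then show ?thesis using cls by auto
      qed
    qed
    show ?thesis using g1 g2 g3 unfolding good_def by blast
  qed
qed

lemma count_bound:
  fixes \<alpha>1 \<alpha>2 :: real and T n r m :: nat
  assumes a1: "0<\<alpha>1" and a2: "0<\<alpha>2" and n: "n>0" and T: "T*(r-1) \<le> n*n"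
    and r: "real r - 1 > 4/(\<alpha>1*\<alpha>2)" and r2: "r \<ge> 2"
    and m: "real m * (\<alpha>2 * real n / 2) \<le> real T"
  shows "real m < \<alpha>1 * real n"
proof (rule ccontr)
  assume "\<not> real m < \<alpha>1 * real n"
  then have mge: "real m \<ge> \<alpha>1 * real n" by simp
  have rr: "real (r - 1) = real r - 1" using r2 by (simp add: of_nat_diff)
  have T': "real T * (real r - 1) \<le> real n * real n"
    using T rr by (metis of_nat_le_iff of_nat_mult)
  have rpos: "real r - 1 > 0" using r2 by simp
  have np: "real n > 0" using n by simp
  have "real m * (\<alpha>2 * real n / 2) * (real r - 1) \<le> real T * (real r - 1)"
    using m rpos by (intro mult_right_mono) auto
  also have "\<dots> \<le> real n * real n" by (rule T')
  finally have h1: "real m * \<alpha>2 * (real r - 1) * real n \<le> 2 * real n * real n" by (simp add: field_simps)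
  then have h2: "real m * \<alpha>2 * (real r - 1) \<le> 2 * real n" using np
    by (metis mult.commute mult_le_cancel_right_pos)
  have "4 < \<alpha>1 * \<alpha>2 * (real r - 1)" using r a1 a2 by (simp add: field_simps)
  then have "4 * real n < \<alpha>1 * \<alpha>2 * (real r - 1) * real n" using np by simp
  also have "\<dots> = (\<alpha>1 * real n) * (\<alpha>2 * (real r - 1))" by (simp add: field_simps)
  also have "\<dots> \<le> real m * (\<alpha>2 * (real r - 1))"
    using mge a2 rpos by (intro mult_right_mono) auto
  also have "\<dots> \<le> 2 * real n" using h2 by (simp add: field_simps)
  finally show False using np by simp
qed

theorem proposition6p9:
  fixes \<alpha>1 \<alpha>2 :: real
  assumes "0 < \<alpha>1" "\<alpha>1 < 1" "0 < \<alpha>2" "\<alpha>2 < 1"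
  shows "\<exists>r0::nat. \<forall>r\<ge>r0. \<exists>n0::nat. \<forall>n\<ge>n0.
     \<forall>(V::'a set) (E::'a set set) (R::('a set \<times> 'a set) set) (C::'a set \<Rightarrow> 'c set).
       linear_hypergraph V E \<and> card V = n \<and> (\<forall>e\<in>E. card e \<ge> r) \<and>
       linear_order_on E R \<and>
       (\<forall>e\<in>E. finite (C e) \<and> real (card (C e)) \<ge> real (back_degree E R e) + \<alpha>1 * real n)
       \<longrightarrow> (\<exists>\<phi>::'a set \<Rightarrow> 'c. proper_edge_colouring E \<phi> \<and> bounded_colouring \<alpha>2 n E \<phi> \<and>
               (\<forall>e\<in>E. \<phi> e \<in> C e))"
proof -
  define r0 where "r0 = nat \<lceil>4/(\<alpha>1*\<alpha>2)\<rceil> + 2"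
  have main: "\<exists>\<phi>::'a set \<Rightarrow> 'c. proper_edge_colouring E \<phi> \<and> bounded_colouring \<alpha>2 n E \<phi> \<and> (\<forall>e\<in>E. \<phi> e \<in> C e)"
    if r: "r \<ge> r0" and n1: "n \<ge> 1"
      and lin: "linear_hypergraph V E" and cardV: "card V = n" and sizes: "\<forall>e\<in>E. card e \<ge> r"
      and lo: "linear_order_on E R"
      and lists: "\<forall>e\<in>E. finite (C e) \<and> real (card (C e)) \<ge> real (back_degree E R e) + \<alpha>1 * real n"
    for r n and V :: "'a set" and E R and C :: "'a set \<Rightarrow> 'c set"
  proof -
    have r2: "r \<ge> 2" using r r0_def by auto
    have "real r \<ge> real (nat \<lceil>4/(\<alpha>1*\<alpha>2)\<rceil>) + 2" using r r0_def by simp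
    moreover have "real (nat \<lceil>4/(\<alpha>1*\<alpha>2)\<rceil>) \<ge> 4/(\<alpha>1*\<alpha>2)" by linarith
    ultimately have rbig: "real r - 1 > 4/(\<alpha>1*\<alpha>2)" by linarith
    have finV: "finite V" and sub: "\<forall>e\<in>E. e \<subseteq> V"
      using lin unfolding linear_hypergraph_def hypergraph_def by auto
    have finE: "finite E" using sub finV by (meson Pow_iff finite_Pow_iff finite_subset subsetI)
    have fine: "\<forall>e\<in>E. finite e" using sub finV finite_subset by blast
    have Tb: "(\<Sum>f\<in>E. card f) * (r - 1) \<le> n * n" using sum_bound[OF lin sizes] cardV by simp
    have G: "\<And>m. real m * (\<alpha>2 * real n / 2) \<le> real (\<Sum>f\<in>E. card f) \<Longrightarrow> real m < \<alpha>1 * real n"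
      using count_bound[OF assms(1) assms(3) _ Tb rbig r2] n1 by auto
    define B where "B = {e\<in>E. \<alpha>2 * real n < 2 * real (card e)}"
    define Sm where "Sm = E - B"
    have BE: "B \<subseteq> E" and finB: "finite B" using B_def finE by auto
    have split: "(\<Sum>f\<in>E. card f) = (\<Sum>f\<in>Sm. card f) + (\<Sum>f\<in>B. card f)"
      unfolding Sm_def using sum.subset_diff[OF BE finE] .
    have Bb: "real (card B) * (\<alpha>2 * real n / 2) \<le> real (\<Sum>f\<in>B. card f)"
    proof -
      have "real (card B) * (\<alpha>2 * real n / 2) = (\<Sum>f\<in>B. \<alpha>2 * real n / 2)" by simp
      also have "\<dots> \<le> (\<Sum>f\<in>B. real (card f))" using B_def by (intro sum_mono) auto
      also have "\<dots> = real (\<Sum>f\<in>B. card f)" by simp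
      finally show ?thesis .
    qed
    have "real (\<Sum>f\<in>B. card f) \<le> real (\<Sum>f\<in>E. card f)" unfolding split by (simp only: of_nat_le_iff)
    then have cB: "real (card B) < \<alpha>1 * real n" using G[of "card B"] Bb by linarith
    have "\<forall>e\<in>B. finite (C e) \<and> card B \<le> card (C e)"
    proof
      fix e assume "e \<in> B"
      then have "finite (C e)" "real (card (C e)) \<ge> \<alpha>1 * real n" using lists BE by force+
      then show "finite (C e) \<and> card B \<le> card (C e)" using cB by simp
    qed
    then obtain g where g: "inj_on g B" "\<forall>e\<in>B. g e \<in> C e" using inj_choice[OF finB] by blast
    define Bc where "Bc = g ` B"
    have cBc: "card Bc = card B" using g(1) Bc_def by (simp add: card_image)
    have key: "\<forall>m::nat. real m * (\<alpha>2 * real n / 2) \<le> real (\<Sum>f\<in>Sm. card f) \<longrightarrow> real (card Bc) + real m < \<alpha>1 * real n"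
    proof (intro allI impI)
      fix m :: nat assume m: "real m * (\<alpha>2 * real n / 2) \<le> real (\<Sum>f\<in>Sm. card f)"
      have "real (card B + m) * (\<alpha>2 * real n / 2) \<le> real (\<Sum>f\<in>E. card f)"
        using m Bb split by (simp add: distrib_right)
      then show "real (card Bc) + real m < \<alpha>1 * real n" using G cBc by fastforce
    qed
    have small: "\<forall>e\<in>Sm. 2 * real (card e) \<le> \<alpha>2 * real n" using Sm_def B_def by auto
    obtain \<phi>S where \<phi>S: "good E C Bc \<alpha>2 n Sm \<phi>S"
      using small_col[OF finE fine _ small lo lists _ key, of Sm] Sm_def Bc_def finB by blast
    have gl: "\<forall>e\<in>Sm. \<phi>S e \<in> C e \<and> \<phi>S e \<notin> Bc"
      and gp: "\<forall>e\<in>Sm. \<forall>f\<in>Sm. e \<noteq> f \<and> e \<inter> f \<noteq> {} \<longrightarrow> \<phi>S e \<noteq> \<phi>S f"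
      and gb: "\<forall>c. card {e\<in>Sm. \<phi>S e = c} \<le> 1 \<or> real (card (\<Union>{e\<in>Sm. \<phi>S e = c})) \<le> \<alpha>2 * real n"
      using \<phi>S unfolding good_def by auto
    define \<phi> where "\<phi> e = (if e \<in> B then g e else \<phi>S e)" for e
    have prp: "proper_edge_colouring E \<phi>"
      unfolding proper_edge_colouring_def
    proof (intro ballI impI)
      fix e f assume ef: "e \<in> E" "f \<in> E" "e \<noteq> f \<and> e \<inter> f \<noteq> {}"
      show "\<phi> e \<noteq> \<phi> f"
      proof (cases "e \<in> B"; cases "f \<in> B")
        assume "e \<in> B" "f \<in> B" then show ?thesis using g(1) ef \<phi>_def by (auto simp: inj_on_def)
      next
        assume a: "e \<in> B" "f \<notin> B"
        then have "\<phi>S f \<notin> g ` B" using gl ef Sm_def Bc_def by auto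
        moreover have "g e \<in> g ` B" using a by auto
        ultimately show ?thesis using a \<phi>_def by metis
      next
        assume a: "e \<notin> B" "f \<in> B"
        then have "\<phi>S e \<notin> g ` B" using gl ef Sm_def Bc_def by auto
        moreover have "g f \<in> g ` B" using a by auto
        ultimately show ?thesis using a \<phi>_def by metis
      next
        assume "e \<notin> B" "f \<notin> B" then show ?thesis using gp ef \<phi>_def Sm_def by auto
      qed
    qed
    have bnd: "card {e\<in>E. \<phi> e = c} \<le> 1 \<or> real (card (\<Union>{e\<in>E. \<phi> e = c})) \<le> \<alpha>2 * real n" for c
    proof (cases "c \<in> Bc")
      case True
      then obtain b where b: "b \<in> B" "c = g b" using Bc_def by auto
      have "{e\<in>E. \<phi> e = c} \<subseteq> {b}"
      proof
        fix e assume e: "e \<in> {e\<in>E. \<phi> e = c}"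
        show "e \<in> {b}"
        proof (cases "e \<in> B")
          case True then show ?thesis using e b g(1) \<phi>_def by (auto simp: inj_on_def)
        next
          case False then show ?thesis using e b gl \<phi>_def Sm_def Bc_def by auto
        qed
      qed
      then have "card {e\<in>E. \<phi> e = c} \<le> card {b}" by (intro card_mono) auto
      then show ?thesis by simp
    next
      case False
      then have "{e\<in>E. \<phi> e = c} = {e\<in>Sm. \<phi>S e = c}" using \<phi>_def Sm_def Bc_def by auto
      then show ?thesis using gb by simp
    qed
    have lst: "\<forall>e\<in>E. \<phi> e \<in> C e" using g gl \<phi>_def Sm_def by auto
    show ?thesis using prp bnd lst unfolding bounded_colouring_def by blast
  qed
  show ?thesis
    apply (rule exI[of _ r0])
    apply (intro allI impI)
    apply (rule exI[of _ 1])
    apply (intro allI impI)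
    using main by blast
qed

end
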